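(* Let $U$, $s$ and $r$ be as follows: $n\ge3$, $s$ an $n$-bit string with $s_1=0,s_2=1$, $U$ an $n$-qubit unitary with $U|0^n\rangle=|0^n\rangle$ preserving the span $\mathcal S$ of basis states $|y\rangle$ with $y$ a Fibonacci string with $y_1=0,y_2=1$, and $|s\rangle\in\mathcal S$; $r\in\{-1,0,1\}$ is the output of the control-free echo-verification circuit described in the context. Let $r'=(-1)^x$ where $x$ is the outcome of measuring the ancilla in the vanilla Hadamard test: an ancilla in $|0\rangle$ and a register in $|s\rangle$, apply $H$ to the ancilla, apply controlled-$U$ (controlled on the ancilla), apply $H$ to the ancilla, measure the ancilla. Then $\mathbb E[r']=\mathrm{Re}\langle s|U|s\rangle$, $\mathrm{Var}(r')=1-(\mathrm{Re}\langle s|U|s\rangle)^2$, and $$\mathrm{Var}(r)=\mathrm{Var}(r')-\frac{1-|\langle s|U|s\rangle|^2}{2}\le \mathrm{Var}(r'),$$ with equality if and only if $|\langle s|U|s\rangle|=1$.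
   Context: A Fibonacci string is a bit string with no two consecutive zeros. The control-free echo-verification circuit: let $V$ be the $n$-qubit unitary with $V|0x_2\cdots x_n\rangle=|x_2 0 x_3\cdots x_n\rangle$ and $V|1x_2\cdots x_n\rangle=|x_2 1 (x_3\oplus s_3)\cdots(x_n\oplus s_n)\rangle$; starting from $|0^n\rangle$ apply $H$ on qubit 1, then $V$, $U$, $V^\dagger$, $H$ on qubit 1, and measure all qubits obtaining $x_1,\dots,x_n$; set $r=(-1)^{x_1}$ if $x_2=\cdots=x_n=0$ and $r=0$ otherwise. *)

theory Defs
  imports Complex_Main
begin

text \<open>Computational basis states of m qubits are bit strings, represented as
  bool lists of length m (True = 1); qubit 1 is the head of the list.
  A state is an amplitude function on bit strings; an operator M is given
  by its matrix entries M y x = <y|M|x>.\<close>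

definition bstr :: "nat \<Rightarrow> bool list set" where
  "bstr m = {xs. length xs = m}"

definition ket :: "bool list \<Rightarrow> bool list \<Rightarrow> complex" where
  "ket x = (\<lambda>y. if y = x then 1 else 0)"

definition app :: "nat \<Rightarrow> (bool list \<Rightarrow> bool list \<Rightarrow> complex) \<Rightarrow> (bool list \<Rightarrow> complex)
                   \<Rightarrow> (bool list \<Rightarrow> complex)" where
  "app m M \<psi> = (\<lambda>y. \<Sum>x\<in>bstr m. M y x * \<psi> x)"

definition adj :: "(bool list \<Rightarrow> bool list \<Rightarrow> complex) \<Rightarrow> (bool list \<Rightarrow> bool list \<Rightarrow> complex)" where
  "adj M = (\<lambda>y x. cnj (M x y))"

definition unitary_op :: "nat \<Rightarrow> (bool list \<Rightarrow> bool list \<Rightarrow> complex) \<Rightarrow> bool" where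
  "unitary_op m M \<longleftrightarrow>
     (\<forall>x\<in>bstr m. \<forall>x'\<in>bstr m. (\<Sum>y\<in>bstr m. cnj (M y x) * M y x') = (if x = x' then 1 else 0))"

definition H1 :: "bool list \<Rightarrow> bool list \<Rightarrow> complex" where
  "H1 y x = (if tl y = tl x then (if hd y \<and> hd x then - 1 else 1) / complex_of_real (sqrt 2) else 0)"

definition perm_op :: "(bool list \<Rightarrow> bool list) \<Rightarrow> bool list \<Rightarrow> bool list \<Rightarrow> complex" where
  "perm_op f y x = (if y = f x then 1 else 0)"

definition fib_string :: "bool list \<Rightarrow> bool" where
  "fib_string y \<longleftrightarrow> (\<forall>i. i + 1 < length y \<longrightarrow> y ! i \<or> y ! (i + 1))"

definition fib01 :: "nat \<Rightarrow> bool list set" where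
  "fib01 n = {y \<in> bstr n. fib_string y \<and> \<not> y ! 0 \<and> y ! 1}"

definition preserves_span :: "nat \<Rightarrow> (bool list \<Rightarrow> bool list \<Rightarrow> complex) \<Rightarrow> bool list set \<Rightarrow> bool" where
  "preserves_span n U A \<longleftrightarrow> (\<forall>x\<in>A. \<forall>y\<in>bstr n. y \<notin> A \<longrightarrow> U y x = 0)"

text \<open>The map underlying V:
  V|0 x2 x3..xn> = |x2 0 x3..xn>,  V|1 x2 x3..xn> = |x2 1 (x3+s3)..(xn+sn)>.\<close>
definition Vmap :: "bool list \<Rightarrow> bool list \<Rightarrow> bool list" where
  "Vmap s x = (case x of
      a # b # rest \<Rightarrow> (if a then b # True # map2 (\<noteq>) rest (drop 2 s)
                       else b # False # rest)
    | _ \<Rightarrow> x)"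

definition echo_state :: "nat \<Rightarrow> bool list \<Rightarrow> (bool list \<Rightarrow> bool list \<Rightarrow> complex) \<Rightarrow> bool list \<Rightarrow> complex" where
  "echo_state n s U =
     app n H1 (app n (adj (perm_op (Vmap s))) (app n U (app n (perm_op (Vmap s))
       (app n H1 (ket (replicate n False))))))"

definition echo_prob :: "nat \<Rightarrow> bool list \<Rightarrow> (bool list \<Rightarrow> bool list \<Rightarrow> complex) \<Rightarrow> bool list \<Rightarrow> real" where
  "echo_prob n s U x = (cmod (echo_state n s U x))\<^sup>2"

definition r_val :: "bool list \<Rightarrow> real" where
  "r_val x = (if (\<forall>i\<in>{1..<length x}. \<not> x ! i) then (if x ! 0 then - 1 else 1) else 0)"

definition E_r :: "nat \<Rightarrow> bool list \<Rightarrow> (bool list \<Rightarrow> bool list \<Rightarrow> complex) \<Rightarrow> real" where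
  "E_r n s U = (\<Sum>x\<in>bstr n. echo_prob n s U x * r_val x)"

definition Var_r :: "nat \<Rightarrow> bool list \<Rightarrow> (bool list \<Rightarrow> bool list \<Rightarrow> complex) \<Rightarrow> real" where
  "Var_r n s U = (\<Sum>x\<in>bstr n. echo_prob n s U x * (r_val x)\<^sup>2) - (E_r n s U)\<^sup>2"

text \<open>Vanilla Hadamard test on n+1 qubits, ancilla = qubit 1 (head).\<close>
definition ctrl_op :: "(bool list \<Rightarrow> bool list \<Rightarrow> complex) \<Rightarrow> bool list \<Rightarrow> bool list \<Rightarrow> complex" where
  "ctrl_op U y x = (if hd y = hd x then (if hd x then U (tl y) (tl x) else (if tl y = tl x then 1 else 0)) else 0)"

definition had_state :: "nat \<Rightarrow> bool list \<Rightarrow> (bool list \<Rightarrow> bool list \<Rightarrow> complex) \<Rightarrow> bool list \<Rightarrow> complex" where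
  "had_state n s U = app (n + 1) H1 (app (n + 1) (ctrl_op U) (app (n + 1) H1 (ket (False # s))))"

definition had_prob :: "nat \<Rightarrow> bool list \<Rightarrow> (bool list \<Rightarrow> bool list \<Rightarrow> complex) \<Rightarrow> bool \<Rightarrow> real" where
  "had_prob n s U a = (\<Sum>y\<in>{y \<in> bstr (n + 1). hd y = a}. (cmod (had_state n s U y))\<^sup>2)"

definition r'_val :: "bool \<Rightarrow> real" where
  "r'_val a = (if a then - 1 else 1)"

definition E_r' :: "nat \<Rightarrow> bool list \<Rightarrow> (bool list \<Rightarrow> bool list \<Rightarrow> complex) \<Rightarrow> real" where
  "E_r' n s U = (\<Sum>a\<in>(UNIV::bool set). had_prob n s U a * r'_val a)"

definition Var_r' :: "nat \<Rightarrow> bool list \<Rightarrow> (bool list \<Rightarrow> bool list \<Rightarrow> complex) \<Rightarrow> real" where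
  "Var_r' n s U = (\<Sum>a\<in>(UNIV::bool set). had_prob n s U a * (r'_val a)\<^sup>2) - (E_r' n s U)\<^sup>2"

end

theory Submission
  imports Defs
begin

lemma fin_bstr: "finite (bstr m)"
proof -
  have "bstr m = {xs. set xs \<subseteq> (UNIV::bool set) \<and> length xs = m}" by (auto simp: bstr_def)
  thus ?thesis using finite_lists_length_eq[of "UNIV::bool set" m] by simp
qed

lemma sum_single: "finite A \<Longrightarrow> a \<in> A \<Longrightarrow> (\<And>x. x \<in> A \<Longrightarrow> x \<noteq> a \<Longrightarrow> f x = 0) \<Longrightarrow> sum f A = f a"
  by (metis sum.remove sum.neutral DiffE singletonI add.right_neutral)

lemma sum_two: "finite A \<Longrightarrow> a \<in> A \<Longrightarrow> b \<in> A \<Longrightarrow> a \<noteq> b \<Longrightarrow>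
   (\<And>x. x \<in> A \<Longrightarrow> x \<noteq> a \<Longrightarrow> x \<noteq> b \<Longrightarrow> f x = 0) \<Longrightarrow> sum f A = f a + f b"
proof -
  assume A: "finite A" "a \<in> A" "b \<in> A" "a \<noteq> b" "\<And>x. x \<in> A \<Longrightarrow> x \<noteq> a \<Longrightarrow> x \<noteq> b \<Longrightarrow> f x = 0"
  have "sum f A = f a + sum f (A - {a})" using A by (simp add: sum.remove)
  also have "sum f (A - {a}) = f b" using A by (intro sum_single) auto
  finally show ?thesis .
qed

lemma H1_app:
  assumes "length x = Suc m"
  shows "app (Suc m) H1 \<psi> x = (\<psi> (False # tl x) + (if hd x then -1 else 1) * \<psi> (True # tl x)) / complex_of_real (sqrt 2)"
proof -
  have "app (Suc m) H1 \<psi> x = H1 x (False # tl x) * \<psi> (False # tl x) + H1 x (True # tl x) * \<psi> (True # tl x)"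
    unfolding app_def
  proof (rule sum_two)
    fix z assume z: "z \<in> bstr (Suc m)" "z \<noteq> False # tl x" "z \<noteq> True # tl x"
    then obtain c zs where "z = c # zs" by (cases z) (auto simp: bstr_def)
    with z show "H1 x z * \<psi> z = 0" by (cases c) (auto simp: H1_def)
  qed (insert assms fin_bstr[of "Suc m"], auto simp: bstr_def)
  then show ?thesis by (simp add: H1_def add_divide_distrib)
qed

lemma adjperm_app: "f x \<in> bstr m \<Longrightarrow> app m (adj (perm_op f)) \<chi> x = \<chi> (f x)"
  unfolding app_def
  by (subst sum_single[where a="f x"]) (auto simp: fin_bstr adj_def perm_op_def)

lemma map2_rep: "length xs = k \<Longrightarrow> map2 (\<lambda>x y. x = (\<not> y)) (replicate k False) xs = xs"
  by (induction xs arbitrary: k) auto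

lemma cmod_pm: "(cmod (1 + u))\<^sup>2 = 1 + 2 * Re u + (cmod u)\<^sup>2"
  "(cmod (1 - u))\<^sup>2 = 1 - 2 * Re u + (cmod u)\<^sup>2"
  unfolding cmod_power2 by (simp_all add: power2_eq_square algebra_simps)

lemma nonrep: "length xs = Suc k \<Longrightarrow> (\<forall>i\<in>{1..<Suc (Suc k)}. \<not> (c # xs) ! i) \<Longrightarrow> xs = replicate (Suc k) False"
proof -
  assume a: "length xs = Suc k" "\<forall>i\<in>{1..<Suc (Suc k)}. \<not> (c # xs) ! i"
  have "\<not> xs ! j" if "j < Suc k" for j
    using a(2)[rule_format, of "Suc j"] that by simp
  thus ?thesis using a(1) by (simp add: list_eq_iff_nth_eq del: replicate_Suc)
qed

theorem mainTheorem5: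
  fixes n :: nat and s :: "bool list" and U :: "bool list \<Rightarrow> bool list \<Rightarrow> complex"
  assumes "n \<ge> 3"
    and "length s = n" and "\<not> s ! 0" and "s ! 1"
    and "unitary_op n U"
    and "\<forall>y\<in>bstr n. U y (replicate n False) = (if y = replicate n False then 1 else 0)"
    and "preserves_span n U (fib01 n)"
    and "s \<in> fib01 n"
  shows "E_r' n s U = Re (U s s)
       \<and> Var_r' n s U = 1 - (Re (U s s))\<^sup>2
       \<and> Var_r n s U = Var_r' n s U - (1 - (cmod (U s s))\<^sup>2) / 2
       \<and> Var_r n s U \<le> Var_r' n s U
       \<and> (Var_r n s U = Var_r' n s U \<longleftrightarrow> cmod (U s s) = 1)"
proof -
  obtain k where nk: "n = Suc (Suc k)" using assms(1) by (intro that[of "n - 2"]) simp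
  obtain a b t where abt: "s = a # b # t" and lt: "length t = k"
    using assms(2) nk by (auto simp: length_Suc_conv)
  have st: "s = False # True # t" using abt assms(3,4) by simp
  define z0 where "z0 = replicate n False"
  define e1 where "e1 = True # replicate (Suc k) False"
  define u where "u = U s s"
  have z0e: "z0 = False # replicate (Suc k) False" using nk z0_def by simp
  have z0b: "z0 \<in> bstr n" and e1b: "e1 \<in> bstr n" and sb: "s \<in> bstr n"
    using nk assms(2) by (auto simp: z0_def e1_def bstr_def)
  have sz: "s \<noteq> z0" using st z0e by simp
  have z0e1: "z0 \<noteq> e1" using z0e e1_def by simp
  have U0s: "U z0 s = 0"
  proof -
    have "z0 \<notin> fib01 n" using z0e by (simp add: fib01_def)
    thus ?thesis using assms(7,8) z0b by (auto simp: preserves_span_def)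
  qed
  have Us0: "U s z0 = 0" using assms(6) sb sz by (simp add: z0_def)
  have U00: "U z0 z0 = 1" using assms(6) z0b by (simp add: z0_def)
  have V0: "Vmap s z0 = z0" using z0e by (simp add: Vmap_def)
  have V1: "Vmap s e1 = s" using st lt by (simp add: Vmap_def e1_def map2_rep)
  define h where "h = app n H1 (ket z0)"
  have h: "h x = (if tl x = replicate (Suc k) False then 1 / complex_of_real (sqrt 2) else 0)" if "x \<in> bstr n" for x
    using that unfolding h_def nk using H1_app[of x "Suc k" "ket z0"]
    by (auto simp: bstr_def ket_def z0e nk)
  define \<phi> where "\<phi> = app n (perm_op (Vmap s)) h"
  have \<phi>: "\<phi> y = ((if y = z0 then 1 else 0) + (if y = s then 1 else 0)) / complex_of_real (sqrt 2)" for y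
  proof -
    have "\<phi> y = perm_op (Vmap s) y z0 * h z0 + perm_op (Vmap s) y e1 * h e1"
      unfolding \<phi>_def app_def
    proof (rule sum_two)
      fix x assume x: "x \<in> bstr n" "x \<noteq> z0" "x \<noteq> e1"
      then obtain c xs where "x = c # xs" by (cases x) (auto simp: bstr_def nk)
      with x show "perm_op (Vmap s) y x * h x = 0" using h[OF x(1)] z0e e1_def
        by (cases c) auto
    qed (use z0b e1b z0e1 fin_bstr in auto)
    thus ?thesis using h[OF z0b] h[OF e1b] V0 V1 z0e e1_def
      by (simp add: perm_op_def add_divide_distrib)
  qed
  define \<chi> where "\<chi> = app n U \<phi>"
  have \<chi>: "\<chi> y = (U y z0 + U y s) / complex_of_real (sqrt 2)" for y
  proof -
    have "\<chi> y = U y z0 * \<phi> z0 + U y s * \<phi> s"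
      unfolding \<chi>_def app_def
      by (rule sum_two) (use z0b sb sz fin_bstr in \<open>auto simp: \<phi>\<close>)
    thus ?thesis using \<phi> sz by (simp add: add_divide_distrib)
  qed
  define \<omega> where "\<omega> = app n (adj (perm_op (Vmap s))) \<chi>"
  have w0: "\<omega> z0 = 1 / complex_of_real (sqrt 2)"
    using adjperm_app[of "Vmap s" z0 n \<chi>] V0 z0b \<chi> U00 U0s by (simp add: \<omega>_def)
  have w1: "\<omega> e1 = u / complex_of_real (sqrt 2)"
    using adjperm_app[of "Vmap s" e1 n \<chi>] V1 sb \<chi> Us0 by (simp add: \<omega>_def u_def)
  have es: "echo_state n s U = app n H1 \<omega>"
    unfolding echo_state_def \<omega>_def \<chi>_def \<phi>_def h_def z0_def ..
  have sq2: "complex_of_real (sqrt 2) * complex_of_real (sqrt 2) = 2"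
    by (simp flip: of_real_mult)
  have aux: "(x / c + y / c) / c = (x + y) / (c * c)"
    "(x / c - y / c) / c = (x - y) / (c * c)" for x y c :: complex
    by (simp_all add: add_divide_distrib diff_divide_distrib)
  have f0: "echo_state n s U z0 = (1 + u) / 2"
  proof -
    have "echo_state n s U z0 = (\<omega> z0 + \<omega> e1) / complex_of_real (sqrt 2)"
      using H1_app[of z0 "Suc k" \<omega>] es z0e e1_def nk by simp
    also have "\<dots> = (1 + u) / 2" unfolding w0 w1 aux sq2 ..
    finally show ?thesis .
  qed
  have f1: "echo_state n s U e1 = (1 - u) / 2"
  proof -
    have "echo_state n s U e1 = (\<omega> z0 - \<omega> e1) / complex_of_real (sqrt 2)"
      using H1_app[of e1 "Suc k" \<omega>] es z0e e1_def nk by simp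
    also have "\<dots> = (1 - u) / 2" unfolding w0 w1 aux sq2 ..
    finally show ?thesis .
  qed
  have rz: "r_val x = 0" if xb: "x \<in> bstr n" "x \<noteq> z0" "x \<noteq> e1" for x
  proof -
    obtain c xs where x: "x = c # xs" "length xs = Suc k" using xb(1) nk by (cases x) (auto simp: bstr_def)
    show ?thesis using xb nonrep[OF x(2), of c] x z0e e1_def unfolding r_val_def nk
      by (cases c) auto
  qed
  have r0: "r_val z0 = 1" using z0e by (auto simp: r_val_def nth_Cons')
  have r1: "r_val e1 = -1" using e1_def by (auto simp: r_val_def nth_Cons')
  have Er: "E_r n s U = echo_prob n s U z0 - echo_prob n s U e1"
    unfolding E_r_def
    by (subst sum_two[where a=z0 and b=e1]) (use z0b e1b z0e1 fin_bstr rz r0 r1 in auto)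
  have Er2: "(\<Sum>x\<in>bstr n. echo_prob n s U x * (r_val x)\<^sup>2) = echo_prob n s U z0 + echo_prob n s U e1"
    by (subst sum_two[where a=z0 and b=e1]) (use z0b e1b z0e1 fin_bstr rz r0 r1 in auto)
  have p0: "echo_prob n s U z0 = (1 + 2 * Re u + (cmod u)\<^sup>2) / 4"
    unfolding echo_prob_def f0 by (simp add: norm_divide power_divide cmod_pm)
  have p1: "echo_prob n s U e1 = (1 - 2 * Re u + (cmod u)\<^sup>2) / 4"
    unfolding echo_prob_def f1 by (simp add: norm_divide power_divide cmod_pm)
  have Varr: "Var_r n s U = (1 + (cmod u)\<^sup>2) / 2 - (Re u)\<^sup>2"
    unfolding Var_r_def Er Er2 p0 p1 by (simp add: field_simps)
  define \<psi>0 where "\<psi>0 = app (n + 1) H1 (ket (False # s))"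
  have \<psi>0: "\<psi>0 z = (if tl z = s then 1 / complex_of_real (sqrt 2) else 0)" if zb: "z \<in> bstr (n + 1)" for z
    using H1_app[of z n "ket (False # s)"] zb unfolding \<psi>0_def by (auto simp: bstr_def ket_def)
  have Fsb: "False # s \<in> bstr (n + 1)" and Tsb: "True # s \<in> bstr (n + 1)" using assms(2) by (auto simp: bstr_def)
  define \<xi> where "\<xi> = app (n + 1) (ctrl_op U) \<psi>0"
  have \<xi>F: "\<xi> (False # y) = (if y = s then 1 / complex_of_real (sqrt 2) else 0)" for y
  proof -
    have "\<xi> (False # y) = ctrl_op U (False # y) (False # s) * \<psi>0 (False # s)"
      unfolding \<xi>_def app_def
    proof (rule sum_single)
      fix z assume z: "z \<in> bstr (n + 1)" "z \<noteq> False # s"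
      show "ctrl_op U (False # y) z * \<psi>0 z = 0"
      proof (cases "tl z = s \<and> \<not> hd z")
        case True
        then have "z = False # s" using z(1) by (cases z) (auto simp: bstr_def)
        then show ?thesis using z(2) by simp
      next
        case False
        then show ?thesis using \<psi>0[OF z(1)] by (auto simp: ctrl_op_def)
      qed
    qed (use Fsb fin_bstr in auto)
    thus ?thesis using \<psi>0[OF Fsb] by (simp add: ctrl_op_def)
  qed
  have \<xi>T: "\<xi> (True # y) = U y s / complex_of_real (sqrt 2)" for y
  proof -
    have "\<xi> (True # y) = ctrl_op U (True # y) (True # s) * \<psi>0 (True # s)"
      unfolding \<xi>_def app_def
    proof (rule sum_single)
      fix z assume z: "z \<in> bstr (n + 1)" "z \<noteq> True # s"
      show "ctrl_op U (True # y) z * \<psi>0 z = 0"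
      proof (cases "tl z = s \<and> hd z")
        case True
        then have "z = True # s" using z(1) by (cases z) (auto simp: bstr_def)
        then show ?thesis using z(2) by simp
      next
        case False
        then show ?thesis using \<psi>0[OF z(1)] by (auto simp: ctrl_op_def)
      qed
    qed (use Tsb fin_bstr in auto)
    thus ?thesis using \<psi>0[OF Tsb] by (simp add: ctrl_op_def)
  qed
  have hs: "had_state n s U = app (n + 1) H1 \<xi>"
    unfolding had_state_def \<xi>_def \<psi>0_def ..
  have aux2: "(x / c + d * (y / c)) / c = (x + d * y) / (c * c)" for x y c d :: complex
    by (simp add: add_divide_distrib)
  have hsy: "had_state n s U (a # y) = ((if y = s then 1 else 0) + (if a then -1 else 1) * U y s) / 2"
    if yb: "y \<in> bstr n" for a y
  proof -
    have "had_state n s U (a # y) = (\<xi> (False # y) + (if a then -1 else 1) * \<xi> (True # y)) / complex_of_real (sqrt 2)"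
      using H1_app[of "a # y" n \<xi>] yb hs by (simp add: bstr_def)
    also have "\<dots> = ((if y = s then 1 else 0) / complex_of_real (sqrt 2) + (if a then -1 else 1) * (U y s / complex_of_real (sqrt 2))) / complex_of_real (sqrt 2)"
      unfolding \<xi>F \<xi>T by simp
    also have "\<dots> = ((if y = s then 1 else 0) + (if a then -1 else 1) * U y s) / 2"
      unfolding aux2 sq2 ..
    finally show ?thesis .
  qed
  define N where "N = (\<Sum>y\<in>bstr n. (cmod (U y s))\<^sup>2)"
  have N1: "N = 1"
  proof -
    have "(\<Sum>y\<in>bstr n. cnj (U y s) * U y s) = 1" using assms(5) sb by (simp add: unitary_op_def)
    moreover have "cnj (U y s) * U y s = complex_of_real ((cmod (U y s))\<^sup>2)" for y
      by (subst complex_norm_square) (simp add: mult.commute)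
    ultimately have "complex_of_real N = 1" by (simp add: N_def)
    thus ?thesis by (metis of_real_1 of_real_eq_iff)
  qed
  have uN: "(cmod u)\<^sup>2 \<le> N" unfolding N_def u_def
    by (rule member_le_sum) (use sb fin_bstr in auto)
  have Nsplit: "N = (cmod u)\<^sup>2 + (\<Sum>y\<in>bstr n - {s}. (cmod (U y s))\<^sup>2)"
    unfolding N_def u_def using sb fin_bstr by (simp add: sum.remove)
  have hp: "had_prob n s U a = (2 + 2 * (if a then -1 else 1) * Re u) / 4" for a
  proof -
    have set: "{y \<in> bstr (n + 1). hd y = a} = (Cons a) ` bstr n"
    proof
      show "{y \<in> bstr (n + 1). hd y = a} \<subseteq> (Cons a) ` bstr n"
      proof
        fix y assume "y \<in> {y \<in> bstr (n + 1). hd y = a}"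
        then show "y \<in> (Cons a) ` bstr n" by (cases y) (auto simp: bstr_def)
      qed
    qed (auto simp: bstr_def)
    have "had_prob n s U a = (\<Sum>y\<in>bstr n. (cmod (had_state n s U (a # y)))\<^sup>2)"
      unfolding had_prob_def set by (simp add: sum.reindex)
    also have "\<dots> = (\<Sum>y\<in>bstr n. (if y = s then (cmod (1 + (if a then -1 else 1) * u))\<^sup>2 / 4 else (cmod (U y s))\<^sup>2 / 4))"
    proof (rule sum.cong)
      fix y assume yb: "y \<in> bstr n"
      show "(cmod (had_state n s U (a # y)))\<^sup>2 = (if y = s then (cmod (1 + (if a then -1 else 1) * u))\<^sup>2 / 4 else (cmod (U y s))\<^sup>2 / 4)"
        unfolding hsy[OF yb] u_def by (cases a) (auto simp: norm_divide power_divide norm_minus_cancel)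
    qed simp
    also have "\<dots> = (cmod (1 + (if a then -1 else 1) * u))\<^sup>2 / 4 + (\<Sum>y\<in>bstr n - {s}. (cmod (U y s))\<^sup>2) / 4"
      using sb fin_bstr by (simp add: sum.remove sum_divide_distrib)
    also have "\<dots> = (cmod (1 + (if a then -1 else 1) * u))\<^sup>2 / 4 + (1 - (cmod u)\<^sup>2) / 4"
      using Nsplit N1 by simp
    also have "\<dots> = (2 + 2 * (if a then -1 else 1) * Re u) / 4"
      by (cases a) (simp_all add: cmod_pm divide_simps)
    finally show ?thesis .
  qed
  have Er': "E_r' n s U = Re u"
    unfolding E_r'_def using hp[of True] hp[of False] by (simp add: UNIV_bool r'_val_def)
  have Varr': "Var_r' n s U = 1 - (Re u)\<^sup>2"
    unfolding Var_r'_def Er' using hp[of True] hp[of False] by (simp add: UNIV_bool r'_val_def)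
  have u1: "(cmod u)\<^sup>2 \<le> 1" using uN N1 by simp
  show ?thesis
  proof (intro conjI)
    show "E_r' n s U = Re (U s s)" using Er' u_def by simp
    show "Var_r' n s U = 1 - (Re (U s s))\<^sup>2" using Varr' u_def by simp
    show "Var_r n s U = Var_r' n s U - (1 - (cmod (U s s))\<^sup>2) / 2" using Varr Varr' u_def by (simp add: field_simps)
    show "Var_r n s U \<le> Var_r' n s U" using Varr Varr' u1 by simp
    show "(Var_r n s U = Var_r' n s U) = (cmod (U s s) = 1)"
    proof -
      have "(Var_r n s U = Var_r' n s U) = ((cmod u)\<^sup>2 = 1)" using Varr Varr' by auto
      also have "\<dots> = (cmod u = 1)" using norm_ge_zero[of u] unfolding power2_eq_1_iff by linarith
      finally show ?thesis using u_def by simp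
    qed
  qed
qed

end
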